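(* Every almost unperforated Cu-semigroup satisfying (O5) is left-soft separative.
   Context: A Cu-semigroup is a positively ordered commutative monoid satisfying (O1)–(O4): increasing sequences have suprema; each element is the supremum of a $\ll$-increasing sequence; $\ll$ is compatible with addition; suprema of increasing sequences are additive. Here $x\ll y$ means whenever $y\le\sup_n z_n$ for increasing $(z_n)$, $x\le z_m$ for some $m$. (O5): if $x+y\le z$, $x'\ll x$, $y'\ll y$, then there is $c$ with $y'\ll c$ and $x'+c\le z\le x+c$. $\infty x=\sup_n nx$. $x$ is strongly soft if for every $x'\ll x$ there is $t$ with $x'+t\ll x$ and $x'\ll\infty t$; $S_{\mathrm{soft}}$ is the set of strongly soft elements. $S$ is almost unperforated if $(n+1)x\le ny$ for some $n\ge1$ implies $x\le y$. $S$ is left-soft separative if whenever $y,t\in S$, $x\in S_{\mathrm{soft}}$ satisfy $x+t\ll y+t$, $t\ll\infty x$ and $t\ll\infty y$, then $x\ll y$. *)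

theory Defs
  imports Main
begin

text \<open>A Cu-semigroup is modelled as a type of class ordered_comm_monoid_add
(partially ordered commutative monoid with translation-invariant order),
subject to positivity and axioms (O1)--(O4), stated below.\<close>

definition is_sup :: "(nat \<Rightarrow> 'a::order) \<Rightarrow> 'a \<Rightarrow> bool" where
  "is_sup z s \<longleftrightarrow> (\<forall>n. z n \<le> s) \<and> (\<forall>u. (\<forall>n. z n \<le> u) \<longrightarrow> s \<le> u)"

definition way_below :: "'a::order \<Rightarrow> 'a \<Rightarrow> bool" (infix "\<lless>" 50) where
  "x \<lless> y \<longleftrightarrow> (\<forall>z s. mono z \<longrightarrow> is_sup z s \<longrightarrow> y \<le> s \<longrightarrow> (\<exists>m. x \<le> z m))"

definition nmul :: "nat \<Rightarrow> 'a::comm_monoid_add \<Rightarrow> 'a" where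
  "nmul n x = (\<Sum>i<n. x)"

definition infty :: "'a::ordered_comm_monoid_add \<Rightarrow> 'a" where
  "infty x = (THE s. is_sup (\<lambda>n. nmul n x) s)"

definition cu_semigroup :: "'a::ordered_comm_monoid_add itself \<Rightarrow> bool" where
  "cu_semigroup _ \<longleftrightarrow>
     (\<forall>x::'a. 0 \<le> x) \<and>
     (\<forall>z::nat \<Rightarrow> 'a. mono z \<longrightarrow> (\<exists>s. is_sup z s)) \<and>
     (\<forall>x::'a. \<exists>z. (\<forall>n. z n \<lless> z (Suc n)) \<and> is_sup z x) \<and>
     (\<forall>x' x y' y :: 'a. x' \<lless> x \<longrightarrow> y' \<lless> y \<longrightarrow> x' + y' \<lless> x + y) \<and>
     (\<forall>(z::nat \<Rightarrow> 'a) w s t. mono z \<longrightarrow> mono w \<longrightarrow> is_sup z s \<longrightarrow> is_sup w t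
          \<longrightarrow> is_sup (\<lambda>n. z n + w n) (s + t))"

definition O5 :: "'a::ordered_comm_monoid_add itself \<Rightarrow> bool" where
  "O5 _ \<longleftrightarrow> (\<forall>x y z x' y' :: 'a. x + y \<le> z \<longrightarrow> x' \<lless> x \<longrightarrow> y' \<lless> y \<longrightarrow>
      (\<exists>c. y' \<lless> c \<and> x' + c \<le> z \<and> z \<le> x + c))"

definition strongly_soft :: "'a::ordered_comm_monoid_add \<Rightarrow> bool" where
  "strongly_soft x \<longleftrightarrow> (\<forall>x'. x' \<lless> x \<longrightarrow> (\<exists>t. x' + t \<lless> x \<and> x' \<lless> infty t))"

definition almost_unperforated :: "'a::ordered_comm_monoid_add itself \<Rightarrow> bool" where
  "almost_unperforated _ \<longleftrightarrow>
     (\<forall>x y :: 'a. (\<exists>n\<ge>1. nmul (n + 1) x \<le> nmul n y) \<longrightarrow> x \<le> y)"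

definition left_soft_separative :: "'a::ordered_comm_monoid_add itself \<Rightarrow> bool" where
  "left_soft_separative _ \<longleftrightarrow>
     (\<forall>x y t :: 'a. strongly_soft x \<longrightarrow> x + t \<lless> y + t \<longrightarrow> t \<lless> infty x \<longrightarrow> t \<lless> infty y
        \<longrightarrow> x \<lless> y)"

end

theory Submission
  imports Defs
begin

lemma wb_le: "(x::'a::order) \<lless> y \<Longrightarrow> x \<le> y"
proof -
  assume "x \<lless> y"
  moreover have "mono (\<lambda>_::nat. y)" by (simp add: mono_def)
  moreover have "is_sup (\<lambda>_::nat. y) y" by (simp add: is_sup_def)
  ultimately show ?thesis unfolding way_below_def by blast
qed

lemma wb_trans1: "(a::'a::order) \<lless> b \<Longrightarrow> b \<le> c \<Longrightarrow> a \<lless> c"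
  unfolding way_below_def by (meson order_trans)

lemma wb_trans2: "(a::'a::order) \<le> b \<Longrightarrow> b \<lless> c \<Longrightarrow> a \<lless> c"
  unfolding way_below_def by (meson order_trans)

lemma nmul_0[simp]: "nmul 0 x = 0" by (simp add: nmul_def)

lemma nmul_Suc: "nmul (Suc n) x = x + nmul n x" by (simp add: nmul_def add.commute)

lemma nmul_add: "nmul (a+b) x = nmul a x + nmul b x"
  by (induct a) (simp_all add: nmul_Suc add.assoc)

lemma nmul_mult: "nmul (a*b) x = nmul a (nmul b x)"
  by (induct a) (simp_all add: nmul_Suc nmul_add)

lemma nmul_distrib: "nmul n (x+y) = nmul n x + nmul n (y::'a::comm_monoid_add)"
  by (induct n) (simp_all add: nmul_Suc ac_simps)

lemma nmul_mono: "(x::'a::ordered_comm_monoid_add) \<le> y \<Longrightarrow> nmul n x \<le> nmul n y"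
  by (induct n) (simp_all add: nmul_Suc add_mono)

lemma nmul_nonneg: "0 \<le> (x::'a::ordered_comm_monoid_add) \<Longrightarrow> 0 \<le> nmul n x"
  using nmul_mono[of 0 x n] by (simp add: nmul_def)

lemma nmul_mono_n: "0 \<le> (x::'a::ordered_comm_monoid_add) \<Longrightarrow> a \<le> b \<Longrightarrow> nmul a x \<le> nmul b x"
proof -
  assume x: "0 \<le> x" and ab: "a \<le> b"
  have "nmul b x = nmul a x + nmul (b-a) x" using ab nmul_add[of a "b-a" x] by simp
  moreover have "nmul a x + 0 \<le> nmul a x + nmul (b-a) x"
    using nmul_nonneg[OF x] by (rule add_left_mono)
  ultimately show ?thesis by simp
qed

lemma nmul_iter: "(x::'a::ordered_comm_monoid_add) + t \<le> y + t \<Longrightarrow> nmul n x + t \<le> nmul n y + t"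
proof (induct n)
  case 0 then show ?case by simp
next
  case (Suc n)
  have "nmul (Suc n) x + t = x + (nmul n x + t)" by (simp add: nmul_Suc ac_simps)
  also have "\<dots> \<le> x + (nmul n y + t)" using Suc by (simp add: add_left_mono)
  also have "\<dots> = nmul n y + (x + t)" by (simp add: ac_simps)
  also have "\<dots> \<le> nmul n y + (y + t)" using Suc(2) by (rule add_left_mono)
  also have "\<dots> = nmul (Suc n) y + t" by (simp add: nmul_Suc ac_simps)
  finally show ?case .
qed

lemma is_sup_unique: "is_sup z s \<Longrightarrow> is_sup z s' \<Longrightarrow> s = s'"
  unfolding is_sup_def by (meson antisym)

theorem lemma4p7:
  assumes "cu_semigroup TYPE('a::ordered_comm_monoid_add)"
    and "O5 TYPE('a)"
    and "almost_unperforated TYPE('a)"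
  shows "left_soft_separative TYPE('a)"
proof -
  from assms(1) have pos: "\<forall>x::'a. 0 \<le> x"
    and O1: "\<forall>z::nat \<Rightarrow> 'a. mono z \<longrightarrow> (\<exists>s. is_sup z s)"
    and O2: "\<forall>x::'a. \<exists>z. (\<forall>n. z n \<lless> z (Suc n)) \<and> is_sup z x"
    and O4: "\<forall>(z::nat \<Rightarrow> 'a) w s t. mono z \<longrightarrow> mono w \<longrightarrow> is_sup z s \<longrightarrow> is_sup w t
          \<longrightarrow> is_sup (\<lambda>n. z n + w n) (s + t)"
    unfolding cu_semigroup_def by blast+
  from assms(3) have AU: "\<And>x y :: 'a. \<And>n. n \<ge> 1 \<Longrightarrow> nmul (n + 1) x \<le> nmul n y \<Longrightarrow> x \<le> y"
    unfolding almost_unperforated_def by blast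
  have infty_sup: "is_sup (\<lambda>n. nmul n x) (infty x)" for x :: 'a
  proof -
    have "mono (\<lambda>n. nmul n x)" using pos by (auto simp: mono_def intro: nmul_mono_n)
    then obtain s where s: "is_sup (\<lambda>n. nmul n x) s" using O1 by blast
    have "infty x = s" unfolding infty_def
      using s is_sup_unique by (intro the_equality) blast+
    then show ?thesis using s by simp
  qed
  have wb_infty: "\<exists>M\<ge>1. a \<le> nmul M x" if ax: "a \<lless> infty x" for a x :: 'a
  proof -
    have "mono (\<lambda>n. nmul n x)" using pos by (auto simp: mono_def intro: nmul_mono_n)
    then obtain m where "a \<le> nmul m x" using ax infty_sup[of x] unfolding way_below_def by blast
    moreover have "nmul m x \<le> nmul (Suc m) x" using pos by (intro nmul_mono_n) auto
    ultimately show ?thesis by (intro exI[of _ "Suc m"]) auto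
  qed
  have seqmono: "mono z" if "\<forall>n. z n \<lless> z (Suc n)" for z :: "nat \<Rightarrow> 'a"
    using that wb_le unfolding mono_iff_le_Suc by blast
  show ?thesis unfolding left_soft_separative_def
  proof (intro allI impI)
    fix x y t :: 'a
    assume soft: "strongly_soft x" and xt: "x + t \<lless> y + t" and "t \<lless> infty x"
      and ty: "t \<lless> infty y"
    obtain yy where yy: "\<forall>n. yy n \<lless> yy (Suc n)" "is_sup yy y" using O2 by blast
    obtain tt where tt: "\<forall>n. tt n \<lless> tt (Suc n)" "is_sup tt t" using O2 by blast
    obtain xx where xx: "\<forall>n. xx n \<lless> xx (Suc n)" "is_sup xx x" using O2 by blast
    have ym: "mono yy" and tm: "mono tt" using seqmono yy tt by auto
    have sup1: "is_sup (\<lambda>n. yy n + tt n) (y + t)" using O4 ym tm yy tt by blast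
    have "mono (\<lambda>n. yy n + tt n)" using ym tm by (simp add: mono_def add_mono)
    then obtain a where a: "x + t \<le> yy a + tt a" using xt sup1 unfolding way_below_def by blast
    have "tt a \<le> t" using tt(2) unfolding is_sup_def by blast
    then have a2: "x + t \<le> yy a + t" using a add_left_mono order_trans by blast
    define w where "w n = nmul n (yy n)" for n
    have wm: "mono w" unfolding mono_def w_def
    proof (intro allI impI)
      fix n n' :: nat assume "n \<le> n'"
      then have "nmul n (yy n) \<le> nmul n (yy n')" using ym by (auto simp: mono_def intro!: nmul_mono)
      also have "\<dots> \<le> nmul n' (yy n')" using pos \<open>n \<le> n'\<close> by (intro nmul_mono_n) auto
      finally show "nmul n (yy n) \<le> nmul n' (yy n')" .
    qed
    then obtain s where s: "is_sup w s" using O1 by blast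
    have nmul_sup: "is_sup (\<lambda>n. nmul k (yy n)) (nmul k y)" for k
    proof (induct k)
      case 0 then show ?case by (simp add: is_sup_def)
    next
      case (Suc k)
      have "mono (\<lambda>n. nmul k (yy n))" using ym by (auto simp: mono_def intro!: nmul_mono)
      then have "is_sup (\<lambda>n. yy n + nmul k (yy n)) (y + nmul k y)" using O4 ym yy(2) Suc by blast
      then show ?case by (simp add: nmul_Suc)
    qed
    have "infty y \<le> s"
    proof -
      have "nmul k y \<le> s" for k
      proof -
        have "nmul k (yy n) \<le> s" for n
        proof -
          have "nmul k (yy n) \<le> nmul k (yy (max k n))" using ym by (auto simp: mono_def intro!: nmul_mono)
          also have "\<dots> \<le> nmul (max k n) (yy (max k n))" using pos by (intro nmul_mono_n) auto
          also have "\<dots> \<le> s" using s unfolding is_sup_def w_def by blast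
          finally show ?thesis .
        qed
        then show ?thesis using nmul_sup[of k] unfolding is_sup_def by blast
      qed
      then show ?thesis using infty_sup[of y] unfolding is_sup_def by blast
    qed
    then obtain b where b: "t \<le> w b" using ty wm s unfolding way_below_def by blast
    define m where "m = max a b"
    define y2 where "y2 = yy m"
    define K where "K = b"
    have xy2: "x + t \<le> y2 + t"
    proof -
      have "yy a \<le> y2" using ym unfolding y2_def m_def mono_def by simp
      then show ?thesis using a2 add_right_mono order_trans by blast
    qed
    have tK: "t \<le> nmul K y2"
    proof -
      have "yy b \<le> y2" using ym unfolding y2_def m_def mono_def by simp
      then show ?thesis using b nmul_mono order_trans unfolding w_def K_def by blast
    qed
    have y2y: "y2 \<lless> y"
    proof -
      have "yy (Suc m) \<le> y" using yy(2) unfolding is_sup_def by blast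
      then show ?thesis using yy(1) wb_trans1 unfolding y2_def by blast
    qed
    have key: "x' \<le> y2" if xx': "x' \<lless> x" for x'
    proof -
      obtain sft where sft: "x' + sft \<lless> x" "x' \<lless> infty sft"
        using soft xx' unfolding strongly_soft_def by blast
      have h0: "x' + sft \<le> x" using sft(1) wb_le by blast
      obtain M where M: "M \<ge> 1" "x' \<le> nmul M sft" using wb_infty[OF sft(2)] by blast
      define n where "n = M * (K + 1)"
      have n1: "n \<ge> 1" using M(1) unfolding n_def by simp
      have h1: "nmul n x' + nmul n sft \<le> nmul n x"
        using nmul_mono[OF h0, of n] by (simp add: nmul_distrib)
      have h2: "nmul n x \<le> nmul n x + t"
        using add_left_mono[of 0 t "nmul n x"] pos by simp
      have h3: "nmul n x + t \<le> nmul n y2 + t" using nmul_iter[OF xy2] .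
      have h4: "nmul n y2 + t \<le> nmul (n + K) y2"
        using add_left_mono[OF tK, of "nmul n y2"] by (simp add: nmul_add)
      have h5: "nmul (K+1) x' \<le> nmul n sft"
      proof -
        have "nmul (K+1) x' \<le> nmul (K+1) (nmul M sft)" using nmul_mono[OF M(2)] .
        also have "\<dots> = nmul n sft" unfolding n_def
          by (simp add: nmul_mult[symmetric] mult.commute)
        finally show ?thesis .
      qed
      have "nmul ((n + K) + 1) x' = nmul n x' + nmul (K+1) x'"
        by (simp add: nmul_add[symmetric] ac_simps)
      also have "\<dots> \<le> nmul n x' + nmul n sft" using h5 by (rule add_left_mono)
      also have "\<dots> \<le> nmul (n + K) y2" using h1 h2 h3 h4 order_trans by blast
      finally have "nmul ((n + K) + 1) x' \<le> nmul (n + K) y2" .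
      then show ?thesis using AU[of "n + K"] n1 by simp
    qed
    have "xx k \<le> y2" for k
    proof -
      have "xx (Suc k) \<le> x" using xx(2) unfolding is_sup_def by blast
      then have "xx k \<lless> x" using xx(1) wb_trans1 by blast
      then show ?thesis using key by blast
    qed
    then have "x \<le> y2" using xx(2) unfolding is_sup_def by blast
    then show "x \<lless> y" using y2y wb_trans2 by blast
  qed
qed

end
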